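(* If $\mathsf B$ is a bad piece, then for any two distinct vertices $v_1,v_2\in V(\mathsf B)$ there exists a subgraph of $\mathsf B$ which is a rainbow path with terminals $v_1$ and $v_2$.
   Context: A (colored) graph is a finite set $\mathsf G$ of pairs $(e,\alpha)$, where the $e$'s are pairwise distinct 2-element subsets of a vertex set and $\alpha$ is a color (colors may repeat). $V(\mathsf G)$ is its vertex set and $\chi(\mathsf G)$ the set of colors used; $\mathsf G$ is rainbow if $|\chi(\mathsf G)|=|\mathsf G|$ and almost rainbow if $|\chi(\mathsf G)|=|\mathsf G|-1$. A subgraph is a subset. A path is a colored graph whose underlying uncolored edges form a path with two distinct terminals. A theta graph is a union $\mathsf P_1\cup\mathsf P_2\cup\mathsf P_3$ of three paths with the same terminals $s\neq t$ such that any two of them share no vertex other than $s,t$ and no underlying uncolored edge. A bad piece is an almost rainbow theta graph with at least $6$ vertices that is the union of three rainbow paths $\mathsf P_1,\mathsf P_2,\mathsf P_3$ as in the definition of a theta graph. *)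

theory Defs
  imports Main
begin

text \<open>A colored graph: a finite set of pairs (e, alpha), e a 2-element set of vertices,
  the underlying uncolored edges pairwise distinct (colors may repeat).\<close>
type_synonym ('v, 'c) cgraph = "('v set \<times> 'c) set"

definition colored_graph :: "('v, 'c) cgraph \<Rightarrow> bool" where
  "colored_graph G \<longleftrightarrow> finite G \<and> (\<forall>p\<in>G. card (fst p) = 2) \<and> inj_on fst G"

definition verts :: "('v, 'c) cgraph \<Rightarrow> 'v set" where
  "verts G = \<Union> (fst ` G)"

definition uedges :: "('v, 'c) cgraph \<Rightarrow> 'v set set" where
  "uedges G = fst ` G"

definition colors :: "('v, 'c) cgraph \<Rightarrow> 'c set" where
  "colors G = snd ` G"

definition rainbow :: "('v, 'c) cgraph \<Rightarrow> bool" where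
  "rainbow G \<longleftrightarrow> card (colors G) = card G"

definition almost_rainbow :: "('v, 'c) cgraph \<Rightarrow> bool" where
  "almost_rainbow G \<longleftrightarrow> card (colors G) + 1 = card G"

definition is_path :: "('v, 'c) cgraph \<Rightarrow> 'v \<Rightarrow> 'v \<Rightarrow> bool" where
  "is_path G s t \<longleftrightarrow> colored_graph G \<and>
     (\<exists>vs. distinct vs \<and> length vs \<ge> 2 \<and> hd vs = s \<and> last vs = t \<and>
        uedges G = {{vs ! i, vs ! Suc i} | i. Suc i < length vs})"

definition theta_decomp :: "('v, 'c) cgraph \<Rightarrow> 'v \<Rightarrow> 'v \<Rightarrow>
    ('v, 'c) cgraph \<Rightarrow> ('v, 'c) cgraph \<Rightarrow> ('v, 'c) cgraph \<Rightarrow> bool" where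
  "theta_decomp G s t P1 P2 P3 \<longleftrightarrow> s \<noteq> t \<and>
     is_path P1 s t \<and> is_path P2 s t \<and> is_path P3 s t \<and>
     verts P1 \<inter> verts P2 \<subseteq> {s, t} \<and> verts P1 \<inter> verts P3 \<subseteq> {s, t} \<and>
     verts P2 \<inter> verts P3 \<subseteq> {s, t} \<and>
     uedges P1 \<inter> uedges P2 = {} \<and> uedges P1 \<inter> uedges P3 = {} \<and>
     uedges P2 \<inter> uedges P3 = {} \<and>
     G = P1 \<union> P2 \<union> P3"

definition theta_graph :: "('v, 'c) cgraph \<Rightarrow> bool" where
  "theta_graph G \<longleftrightarrow> (\<exists>s t P1 P2 P3. theta_decomp G s t P1 P2 P3)"

definition bad_piece :: "('v, 'c) cgraph \<Rightarrow> bool" where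
  "bad_piece B \<longleftrightarrow> colored_graph B \<and> almost_rainbow B \<and> card (verts B) \<ge> 6 \<and>
     (\<exists>s t P1 P2 P3. theta_decomp B s t P1 P2 P3 \<and>
        rainbow P1 \<and> rainbow P2 \<and> rainbow P3)"

end

theory Submission
  imports Defs
begin

definition E :: "'v list \<Rightarrow> 'v set set" where
  "E vs = {{vs ! i, vs ! Suc i} | i. Suc i < length vs}"

lemma E_Nil[simp]: "E [] = {}" and E_single[simp]: "E [x] = {}"
  by (auto simp: E_def)

lemma E_Cons2[simp]: "E (x # y # zs) = insert {x,y} (E (y # zs))"
proof (intro set_eqI iffI)
  fix a assume "a \<in> E (x # y # zs)"
  then obtain i where i: "Suc i < length (x # y # zs)" "a = {(x#y#zs) ! i, (x#y#zs) ! Suc i}"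
    unfolding E_def by blast
  show "a \<in> insert {x,y} (E (y # zs))"
  proof (cases i)
    case 0 then show ?thesis using i by simp
  next
    case (Suc j)
    then have "a = {(y#zs) ! j, (y#zs) ! Suc j}" "Suc j < length (y # zs)" using i by auto
    then show ?thesis unfolding E_def by blast
  qed
next
  fix a assume "a \<in> insert {x,y} (E (y # zs))"
  then consider "a = {x,y}" | "a \<in> E (y # zs)" by blast
  then show "a \<in> E (x # y # zs)"
  proof cases
    case 1
    then have "a = {(x#y#zs) ! 0, (x#y#zs) ! Suc 0}" "Suc 0 < length (x#y#zs)" by auto
    then show ?thesis unfolding E_def by blast
  next
    case 2
    then obtain j where "Suc j < length (y # zs)" "a = {(y#zs) ! j, (y#zs) ! Suc j}"
      unfolding E_def by blast
    then have "a = {(x#y#zs) ! Suc j, (x#y#zs) ! Suc (Suc j)}" "Suc (Suc j) < length (x#y#zs)" by auto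
    then show ?thesis unfolding E_def by blast
  qed
qed

lemma E_Cons: "E (x # xs) = (if xs = [] then {} else insert {x, hd xs} (E xs))"
  by (cases xs) auto

lemma E_append: "E (as @ b # cs) = E (as @ [b]) \<union> E (b # cs)"
proof (induction as)
  case Nil then show ?case by simp
next
  case (Cons a as) then show ?case by (cases as) auto
qed

lemma E_snoc: "xs \<noteq> [] \<Longrightarrow> E (xs @ [y]) = insert {last xs, y} (E xs)"
proof (induction xs)
  case Nil then show ?case by simp
next
  case (Cons a as) then show ?case by (cases as) auto
qed

lemma E_rev[simp]: "E (rev xs) = E xs"
proof (induction xs)
  case Nil then show ?case by simp
next
  case (Cons a as)
  show ?case
  proof (cases as)
    case Nil then show ?thesis by simp
  next
    case (Cons aa list)
    have "rev (a # as) = (rev list @ [aa]) @ [a]" using Cons by simp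
    then have "E (rev (a # as)) = insert {aa, a} (E (rev list @ [aa]))"
      by (simp add: E_snoc del: append_assoc)
    also have "E (rev list @ [aa]) = E as" using Cons.IH Cons by simp
    finally show ?thesis using Cons by (simp add: insert_commute)
  qed
qed

lemma E_set: "length vs \<ge> 2 \<Longrightarrow> \<Union> (E vs) = set vs"
proof (induction vs)
  case Nil then show ?case by simp
next
  case (Cons a as)
  then show ?case
  proof (cases as)
    case Nil then show ?thesis using Cons by simp
  next
    case (Cons b bs)
    then show ?thesis using Cons.IH by (cases bs) auto
  qed
qed

definition CE :: "'v list \<Rightarrow> 'v set set" where
  "CE c = {{c ! j, c ! (Suc j mod length c)} | j. j < length c}"

lemma modarith: "(n::nat) > 0 \<Longrightarrow> (i + Suc j mod n) mod n = Suc ((i + j) mod n) mod n"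
proof -
  assume n: "n > 0"
  have "(i + Suc j mod n) mod n = (i + Suc j) mod n" by (rule mod_add_right_eq)
  also have "\<dots> = Suc (i + j) mod n" by simp
  also have "\<dots> = Suc ((i + j) mod n) mod n" by (rule mod_Suc_eq[symmetric])
  finally show ?thesis .
qed

lemma w_nth2: "c \<noteq> [] \<Longrightarrow> j < length c \<Longrightarrow> (c @ [hd c]) ! Suc j = c ! (Suc j mod length c)"
proof (cases "Suc j < length c")
  case True then show ?thesis by (simp add: nth_append)
next
  case False
  assume "c \<noteq> []" "j < length c"
  then have "Suc j = length c" using False by simp
  then show ?thesis using \<open>c \<noteq> []\<close> by (simp add: nth_append hd_conv_nth)
qed

lemma CE_E: "c \<noteq> [] \<Longrightarrow> CE c = E (c @ [hd c])"
proof (intro set_eqI iffI)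
  fix x assume c: "c \<noteq> []" and "x \<in> CE c"
  then obtain j where j: "j < length c" "x = {c ! j, c ! (Suc j mod length c)}"
    unfolding CE_def by blast
  then have "x = {(c @ [hd c]) ! j, (c @ [hd c]) ! Suc j}" "Suc j < length (c @ [hd c])"
    using w_nth2[OF c j(1)] by (auto simp: nth_append)
  then show "x \<in> E (c @ [hd c])" unfolding E_def by blast
next
  fix x assume c: "c \<noteq> []" and "x \<in> E (c @ [hd c])"
  then obtain j where j: "Suc j < length (c @ [hd c])" "x = {(c @ [hd c]) ! j, (c @ [hd c]) ! Suc j}"
    unfolding E_def by blast
  then have jl: "j < length c" by simp
  have "x = {c ! j, c ! (Suc j mod length c)}"
    using j(2) w_nth2[OF c jl] jl by (simp add: nth_append)
  then show "x \<in> CE c" unfolding CE_def using jl by blast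
qed

lemma CE_rotate: "CE (rotate i c) = CE c"
proof (cases "c = []")
  case True then show ?thesis by simp
next
  case False
  let ?n = "length c"
  have n: "?n > 0" using False by simp
  have A: "CE (rotate i c) \<subseteq> CE c"
  proof
    fix x assume "x \<in> CE (rotate i c)"
    then obtain j where j: "j < ?n" "x = {rotate i c ! j, rotate i c ! (Suc j mod ?n)}"
      by (auto simp: CE_def)
    have r1: "rotate i c ! j = c ! ((i + j) mod ?n)" using j(1) by (simp add: nth_rotate)
    have r2: "rotate i c ! (Suc j mod ?n) = c ! ((i + Suc j mod ?n) mod ?n)"
      using n by (simp add: nth_rotate)
    have "x = {c ! ((i + j) mod ?n), c ! ((i + Suc j mod ?n) mod ?n)}"
      using j(2) r1 r2 by simp
    then have "x = {c ! ((i + j) mod ?n), c ! (Suc ((i+j) mod ?n) mod ?n)}"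
      by (simp only: modarith[OF n])
    moreover have "(i + j) mod ?n < ?n" using n by simp
    ultimately show "x \<in> CE c" unfolding CE_def by blast
  qed
  have B: "CE c \<subseteq> CE (rotate i c)"
  proof
    fix x assume "x \<in> CE c"
    then obtain j where j: "j < ?n" "x = {c ! j, c ! (Suc j mod ?n)}"
      by (auto simp: CE_def)
    define m where "m = (j + ?n - i mod ?n) mod ?n"
    have m: "m < ?n" using n by (simp add: m_def)
    have im: "(i + m) mod ?n = j"
    proof -
      have "i + (j + ?n - i mod ?n) = j + ?n * Suc (i div ?n)"
      proof -
        have q: "i div ?n * ?n + i mod ?n = i" by (rule div_mult_mod_eq)
        have "?n * Suc (i div ?n) = ?n + i div ?n * ?n" by simp
        then show ?thesis using q mod_less_divisor[OF n, of i] by linarith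
      qed
      moreover have "(j + ?n * Suc (i div ?n)) mod ?n = j mod ?n" by (rule mod_mult_self2)
      ultimately have "(i + (j + ?n - i mod ?n)) mod ?n = j mod ?n" by simp
      then have "(i + (j + ?n - i mod ?n)) mod ?n = j" using j(1) by simp
      then show ?thesis unfolding m_def by (simp only: mod_add_right_eq)
    qed
    have r1: "rotate i c ! m = c ! j" using m im by (simp add: nth_rotate)
    have r2: "rotate i c ! (Suc m mod ?n) = c ! (Suc j mod ?n)"
    proof -
      have "rotate i c ! (Suc m mod ?n) = c ! ((i + Suc m mod ?n) mod ?n)"
        using n by (simp add: nth_rotate)
      also have "(i + Suc m mod ?n) mod ?n = Suc j mod ?n" by (simp only: modarith[OF n] im)
      finally show ?thesis .
    qed
    have "x = {rotate i c ! m, rotate i c ! (Suc m mod ?n)}" unfolding r1 r2 by (rule j(2))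
    then show "x \<in> CE (rotate i c)" unfolding CE_def length_rotate using m by blast
  qed
  from A B show ?thesis by blast
qed

lemma E_take: "E (take m xs) \<subseteq> E xs"
  unfolding E_def by auto

lemma E_drop: "E (drop m xs) \<subseteq> E xs"
  unfolding E_def by auto

lemma arcs_disj:
  assumes d: "distinct r" and l: "length r \<ge> 3" and k: "0 < k" "k < length r"
  shows "E (take (Suc k) r) \<inter> E (drop k r @ [hd r]) = {}"
proof (rule ccontr)
  let ?n = "length r"
  let ?w = "drop k r @ [hd r]"
  assume "E (take (Suc k) r) \<inter> E ?w \<noteq> {}"
  then obtain x where x1: "x \<in> E (take (Suc k) r)" and x2: "x \<in> E ?w" by blast
  from x1 obtain a where a: "a < k" "x = {r ! a, r ! Suc a}"
    unfolding E_def using k by auto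
  from x2 obtain b where b: "Suc b < ?n - k + 1" "x = {?w ! b, ?w ! Suc b}"
    unfolding E_def by auto
  have wb: "?w ! b = r ! (k + b)" using b k by (simp add: nth_append)
  have r0: "hd r = r ! 0" using k by (cases r) auto
  have eq: "{r ! a, r ! Suc a} = {r ! (k + b), ?w ! Suc b}" using a b wb by simp
  have ia: "a < ?n" "Suc a < ?n" "k + b < ?n" using a b k by auto
  show False
  proof (cases "Suc b < ?n - k")
    case True
    then have "?w ! Suc b = r ! (k + Suc b)" by (simp add: nth_append)
    with eq have "{r ! a, r ! Suc a} = {r ! (k + b), r ! (k + Suc b)}" by simp
    moreover have "k + Suc b < ?n" using True by simp
    ultimately show False using ia d a
      by (auto simp: doubleton_eq_iff nth_eq_iff_index_eq)
  next
    case False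
    then have "Suc b = ?n - k" using b by simp
    then have "?w ! Suc b = r ! 0" using r0 by (simp add: nth_append)
    with eq have e2: "{r ! a, r ! Suc a} = {r ! (k + b), r ! 0}" by simp
    have kb: "k + b = ?n - 1" using \<open>Suc b = ?n - k\<close> k by simp
    have "0 < ?n" using k by linarith
    show False using e2 ia d a kb l \<open>0 < ?n\<close>
      by (auto simp: doubleton_eq_iff nth_eq_iff_index_eq)
  qed
qed

lemma mk_path:
  assumes cg: "colored_graph B" and "distinct ws" "length ws \<ge> 2" "E ws \<subseteq> uedges B"
  shows "is_path {p\<in>B. fst p \<in> E ws} (hd ws) (last ws)"
proof -
  let ?P = "{p\<in>B. fst p \<in> E ws}"
  have cgP: "colored_graph ?P" using cg unfolding colored_graph_def
    by (auto intro: inj_on_subset)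
  have "uedges ?P = E ws" using assms(4) unfolding uedges_def by auto
  then show ?thesis unfolding is_path_def using cgP assms(2,3)
    by (auto simp: E_def)
qed

lemma rb:
  assumes "finite B" "P \<subseteq> B - {e}" "inj_on snd (B - {e})"
  shows "rainbow P"
  unfolding rainbow_def colors_def
  using assms by (meson card_image inj_on_subset)

lemma cycle:
  assumes dx: "distinct xs" and dy: "distinct ys" and lx: "length xs \<ge> 2" and ly: "length ys \<ge> 2"
    and hx: "hd xs = s" and hy: "hd ys = s" and tx: "last xs = t" and ty: "last ys = t"
    and i: "set xs \<inter> set ys \<subseteq> {s,t}" and ed: "E xs \<inter> E ys = {}"
  shows "\<exists>c. distinct c \<and> length c \<ge> 3 \<and> set c = set xs \<union> set ys \<and> CE c = E xs \<union> E ys"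
proof -
  define c where "c = butlast xs @ butlast (rev ys)"
  have ry: "rev ys = butlast (rev ys) @ [s]"
    using ly hy by (metis append_butlast_last_id last_rev length_0_conv length_rev not_numeral_le_zero)
  have xx: "xs = butlast xs @ [t]" using lx tx
    by (metis append_butlast_last_id length_0_conv not_numeral_le_zero)
  have bxne: "butlast xs \<noteq> []" using lx by (cases xs rule: rev_cases) auto
  have hc: "hd c = s" unfolding c_def using bxne hx xx
    by (metis hd_append2 hd_append)
  have "c @ [hd c] = c @ [s]" using hc by simp
  also have "... = butlast xs @ rev ys" unfolding c_def using ry
    by (metis append_assoc)
  finally have cw: "c @ [hd c] = butlast xs @ rev ys" .
  have "rev ys = t # tl (rev ys)" using ly ty
    by (metis hd_rev list.collapse list.size(3) not_numeral_le_zero rev_is_Nil_conv)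
  then have "E (butlast xs @ rev ys) = E (butlast xs @ [t]) \<union> E (rev ys)"
    by (metis E_append)
  then have Ew: "E (c @ [hd c]) = E xs \<union> E ys" using cw xx by simp
  have cne: "c \<noteq> []" using bxne c_def by simp
  have CEc: "CE c = E xs \<union> E ys" using CE_E[OF cne] Ew by simp
  have tnx: "t \<notin> set (butlast xs)" using dx xx
    by (metis distinct_append disjoint_iff list.set_intros(1))
  have sny: "s \<notin> set (butlast (rev ys))" using dy ry
    by (metis distinct_append distinct_rev disjoint_iff list.set_intros(1))
  have sx: "set xs = set (butlast xs) \<union> {t}" using xx by (metis set_append empty_set list.simps(15) )
  have sy: "set ys = set (butlast (rev ys)) \<union> {s}" using ry
    by (metis set_append empty_set list.simps(15) set_rev)
  have dc: "distinct c" unfolding c_def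
    using dx dy i tnx sny sx sy
    by (auto simp: distinct_butlast distinct_tl)
  have s_in: "s \<in> set (butlast xs)" using bxne hx xx by (metis hd_append2 hd_in_set)
  have "length (rev ys) \<ge> 2" using ly by simp
  then have bry: "butlast (rev ys) \<noteq> []" by (cases "rev ys" rule: rev_cases) auto
  have t_in: "t \<in> set (butlast (rev ys))" using bry \<open>rev ys = t # tl (rev ys)\<close>
    by (metis butlast.simps(2) list.sel(1) list.set_intros(1) hd_Cons_tl)
  have setc: "set c = set xs \<union> set ys" unfolding c_def using sx sy s_in t_in by auto
  have lc: "length c \<ge> 3"
  proof (rule ccontr)
    assume "\<not> 3 \<le> length c"
    then have "length xs = 2" "length ys = 2" using lx ly unfolding c_def by auto
    then have "E xs = {{s,t}}" "E ys = {{s,t}}" using hx hy tx ty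
      by (auto simp: numeral_2_eq_2 length_Suc_conv)
    then show False using ed by simp
  qed
  show ?thesis using dc lc setc CEc by blast
qed

lemma two_paths:
  assumes cg: "colored_graph B"
    and dx: "distinct xs" and dy: "distinct ys" and lx: "length xs \<ge> 2" and ly: "length ys \<ge> 2"
    and hx: "hd xs = s" and hy: "hd ys = s" and tx: "last xs = t" and ty: "last ys = t"
    and i: "set xs \<inter> set ys \<subseteq> {s,t}" and ed: "E xs \<inter> E ys = {}"
    and sub: "E xs \<union> E ys \<subseteq> uedges B"
    and v1: "v1 \<in> set xs \<union> set ys" and v2: "v2 \<in> set xs \<union> set ys" and v12: "v1 \<noteq> v2"
    and ef: "fst e \<noteq> fst f"
    and ie: "inj_on snd (B - {e})" and iff: "inj_on snd (B - {f})"
  shows "\<exists>P. P \<subseteq> B \<and> is_path P v1 v2 \<and> rainbow P"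
proof -
  obtain c where c: "distinct c" "length c \<ge> 3" "set c = set xs \<union> set ys" "CE c = E xs \<union> E ys"
    using cycle[OF dx dy lx ly hx hy tx ty i ed] by blast
  obtain i where ii: "i < length c" "c ! i = v1" using c(3) v1 by (metis in_set_conv_nth)
  define r where "r = rotate i c"
  have dr: "distinct r" and lr: "length r = length c" and CEr: "CE r = CE c"
    using c(1) by (simp_all add: r_def CE_rotate)
  have "rotate i c ! 0 = c ! ((i + 0) mod length c)" by (rule nth_rotate) (use ii in linarith)
  moreover have "0 < length c" using ii by linarith
  ultimately have r0: "r ! 0 = v1" unfolding r_def using ii by simp
  have "v2 \<in> set r" unfolding r_def using c(3) v2 by simp
  then obtain k where kk: "k < length r" "r ! k = v2" by (metis in_set_conv_nth)
  have k0: "k \<noteq> 0"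
  proof
    assume "k = 0"
    then show False using kk(2) r0 v12 by simp
  qed
  have rne: "r \<noteq> []" using kk by auto
  have hr: "hd r = r ! 0" using rne by (simp add: hd_conv_nth)
  have Er: "E (r @ [hd r]) \<subseteq> uedges B" using CE_E[OF rne] CEr c(4) sub by simp
  define ws1 where "ws1 = take (Suc k) r"
  define w2 where "w2 = drop k r @ [hd r]"
  define ws2 where "ws2 = rev w2"
  have disj: "E ws1 \<inter> E ws2 = {}" unfolding ws1_def ws2_def w2_def E_rev
    using arcs_disj[OF dr] c(2) lr k0 kk by simp
  have E1: "E ws1 \<subseteq> uedges B" unfolding ws1_def using Er E_take[of "Suc k" "r @ [hd r]"] kk
    by simp
  have "w2 = drop k (r @ [hd r])" unfolding w2_def using kk by simp
  then have "E ws2 = E (drop k (r @ [hd r]))" unfolding ws2_def E_rev by simp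
  then have E2: "E ws2 \<subseteq> uedges B" using Er E_drop[of k "r @ [hd r]"] by blast
  have d1: "distinct ws1" unfolding ws1_def using dr by simp
  have l1: "length ws1 \<ge> 2" unfolding ws1_def using kk k0 by simp
  have h1: "hd ws1 = v1" unfolding ws1_def using r0 hr by (simp add: hd_take)
  have la1: "last ws1 = v2"
  proof -
    have "take (Suc k) r = take k r @ [r ! k]" using kk by (simp add: take_Suc_conv_app_nth)
    then show ?thesis unfolding ws1_def using kk by simp
  qed
  have "hd r \<notin> set (drop k r)"
  proof
    assume "hd r \<in> set (drop k r)"
    then obtain j where j: "j < length r - k" "drop k r ! j = r ! 0"
      using hr by (metis in_set_conv_nth length_drop)
    then have "r ! (k + j) = r ! 0" using kk by simp
    moreover have "k + j < length r" "0 < length r" using j kk by auto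
    ultimately have "k + j = 0" using dr by (simp add: nth_eq_iff_index_eq)
    then show False using k0 by simp
  qed
  then have d2: "distinct ws2" unfolding ws2_def w2_def using dr by simp
  have l2: "length ws2 \<ge> 2" unfolding ws2_def w2_def using kk by simp
  have h2: "hd ws2 = v1" unfolding ws2_def w2_def using r0 hr by simp
  have la2: "last ws2 = v2" unfolding ws2_def w2_def using kk by (simp add: last_rev hd_drop_conv_nth)
  have p1: "is_path {p\<in>B. fst p \<in> E ws1} v1 v2" using mk_path[OF cg d1 l1 E1] h1 la1 by simp
  have p2: "is_path {p\<in>B. fst p \<in> E ws2} v1 v2" using mk_path[OF cg d2 l2 E2] h2 la2 by simp
  have fin: "finite B" using cg colored_graph_def by blast
  show ?thesis
  proof (cases "fst e \<in> E ws1 \<and> fst f \<in> E ws1")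
    case True
    then have "fst e \<notin> E ws2" using disj by blast
    then have "{p\<in>B. fst p \<in> E ws2} \<subseteq> B - {e}" by auto
    then show ?thesis using p2 rb[OF fin _ ie] by blast
  next
    case False
    then consider "fst e \<notin> E ws1" | "fst f \<notin> E ws1" by blast
    then show ?thesis
    proof cases
      case 1
      then have "{p\<in>B. fst p \<in> E ws1} \<subseteq> B - {e}" by auto
      then show ?thesis using p1 rb[OF fin _ ie] by blast
    next
      case 2
      then have "{p\<in>B. fst p \<in> E ws1} \<subseteq> B - {f}" by auto
      then show ?thesis using p1 rb[OF fin _ iff] by blast
    qed
  qed
qed


lemma path_list:
  assumes "is_path P s t"
  shows "\<exists>xs. distinct xs \<and> length xs \<ge> 2 \<and> hd xs = s \<and> last xs = t \<and>
     uedges P = E xs \<and> verts P = set xs"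
proof -
  obtain vs where vs: "distinct vs" "length vs \<ge> 2" "hd vs = s" "last vs = t"
    "uedges P = {{vs ! i, vs ! Suc i} | i. Suc i < length vs}"
    using assms unfolding is_path_def by blast
  then have u: "uedges P = E vs" by (simp add: E_def)
  have "verts P = \<Union> (uedges P)" by (simp add: verts_def uedges_def)
  then have "verts P = set vs" using u E_set[OF vs(2)] by simp
  then show ?thesis using vs u by blast
qed

theorem mainTheorem5:
  fixes B :: "('v, 'c) cgraph"
  assumes "bad_piece B"
    and "v1 \<in> verts B" and "v2 \<in> verts B" and "v1 \<noteq> v2"
  shows "\<exists>P. P \<subseteq> B \<and> is_path P v1 v2 \<and> rainbow P"
proof -
  obtain s t P1 P2 P3 where cg: "colored_graph B" and ar: "almost_rainbow B"
    and th: "theta_decomp B s t P1 P2 P3"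
    using assms(1) unfolding bad_piece_def by blast
  have fin: "finite B" and ifst: "inj_on fst B" using cg unfolding colored_graph_def by auto
  have "\<not> inj_on snd B"
  proof
    assume "inj_on snd B"
    then have "card (snd ` B) = card B" by (rule card_image)
    then show False using ar unfolding almost_rainbow_def colors_def by simp
  qed
  then obtain e f where ef: "e \<in> B" "f \<in> B" "e \<noteq> f" "snd e = snd f"
    unfolding inj_on_def by blast
  have fef: "fst e \<noteq> fst f" using ifst ef unfolding inj_on_def by blast
  have cB: "card (snd ` B) + 1 = card B" using ar unfolding almost_rainbow_def colors_def .
  have injrem: "inj_on snd (B - {g})" if g: "g \<in> B" "h \<in> B" "g \<noteq> h" "snd g = snd h" for g h
  proof (rule eq_card_imp_inj_on)
    show "finite (B - {g})" using fin by simp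
    have "snd ` (B - {g}) = snd ` B"
    proof (rule subset_antisym)
      show "snd ` (B - {g}) \<subseteq> snd ` B" by blast
      show "snd ` B \<subseteq> snd ` (B - {g})"
      proof (rule subsetI)
        fix y assume "y \<in> snd ` B"
        then obtain p where p: "p \<in> B" "y = snd p" by blast
        show "y \<in> snd ` (B - {g})"
        proof (cases "p = g")
          case True
          then have "y = snd h" using p g by simp
          moreover have "h \<in> B - {g}" using g by simp
          ultimately show ?thesis by blast
        next
          case False then show ?thesis using p by blast
        qed
      qed
    qed
    then show "card (snd ` (B - {g})) = card (B - {g})" using cB g fin by simp
  qed
  have ie: "inj_on snd (B - {e})" using injrem ef by blast
  have iff: "inj_on snd (B - {f})" using injrem[of f e] ef by auto
  from th have st: "is_path P1 s t" "is_path P2 s t" "is_path P3 s t"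
    and vi: "verts P1 \<inter> verts P2 \<subseteq> {s, t}" "verts P1 \<inter> verts P3 \<subseteq> {s, t}"
      "verts P2 \<inter> verts P3 \<subseteq> {s, t}"
    and ui: "uedges P1 \<inter> uedges P2 = {}" "uedges P1 \<inter> uedges P3 = {}"
      "uedges P2 \<inter> uedges P3 = {}"
    and BU: "B = P1 \<union> P2 \<union> P3"
    unfolding theta_decomp_def by auto
  obtain x1 where x1: "distinct x1" "length x1 \<ge> 2" "hd x1 = s" "last x1 = t"
     "uedges P1 = E x1" "verts P1 = set x1" using path_list[OF st(1)] by blast
  obtain x2 where x2: "distinct x2" "length x2 \<ge> 2" "hd x2 = s" "last x2 = t"
     "uedges P2 = E x2" "verts P2 = set x2" using path_list[OF st(2)] by blast
  obtain x3 where x3: "distinct x3" "length x3 \<ge> 2" "hd x3 = s" "last x3 = t"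
     "uedges P3 = E x3" "verts P3 = set x3" using path_list[OF st(3)] by blast
  have "uedges B = uedges P1 \<union> uedges P2 \<union> uedges P3"
    by (simp add: BU uedges_def image_Un)
  then have uB: "uedges B = E x1 \<union> E x2 \<union> E x3"
    using x1(5) x2(5) x3(5) by simp
  have vB: "verts B = set x1 \<union> set x2 \<union> set x3"
    using BU x1 x2 x3 by (auto simp: verts_def)
  have v1: "v1 \<in> set x1 \<union> set x2 \<union> set x3" and v2: "v2 \<in> set x1 \<union> set x2 \<union> set x3"
    using assms(2,3) vB by auto
  note tp = two_paths[OF cg _ _ _ _ _ _ _ _ _ _ _ _ _ assms(4) fef ie iff]
  consider "v1 \<in> set x1 \<union> set x2 \<and> v2 \<in> set x1 \<union> set x2"
    | "v1 \<in> set x1 \<union> set x3 \<and> v2 \<in> set x1 \<union> set x3"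
    | "v1 \<in> set x2 \<union> set x3 \<and> v2 \<in> set x2 \<union> set x3"
    using v1 v2 by blast
  then show ?thesis
  proof cases
    case 1 then show ?thesis
      using tp[of x1 x2 s t] x1 x2 vi ui uB by auto
  next
    case 2 then show ?thesis
      using tp[of x1 x3 s t] x1 x3 vi ui uB by auto
  next
    case 3 then show ?thesis
      using tp[of x2 x3 s t] x2 x3 vi ui uB by auto
  qed
qed

end
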